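(* Let $g\ge1$, $n=g+1$, and let $Q$ be the $g\times g$ matrix with $Q_{ii}=2$, $Q_{ij}=1$ for $i\ne j$. Let $k\in\{1,\dots,g\}$ and let $\mathbf a\in[\mathbf k]$ be a vertex of $V_Q$. Then the Delaunay polytope $D_{\mathbf a,Q}$ is combinatorially equivalent to the hypersimplex $\Delta_{k,n}$, the matroid base polytope of the uniform matroid $U_{k,n}$.
   Context: $V_Q=\{\mathbf a\in\mathbb R^g:\ \mathbf a^TQ\mathbf a\le(\mathbf a-\mathbf c)^TQ(\mathbf a-\mathbf c)\ \forall\mathbf c\in\mathbb Z^g\}$ (Voronoi polytope of the genus-$g$ banana graph). $[\mathbf k]\subset\mathbb R^g$ is the set of vectors with entries in $\{-\tfrac{k}{g+1},\tfrac{g+1-k}{g+1}\}$ having either $k$ or $k-1$ entries equal to $\tfrac{g+1-k}{g+1}$. $D_{\mathbf a,Q}$ is the convex hull of $\mathcal D_{\mathbf a,Q}=\{\mathbf c\in\mathbb Z^g:\ \mathbf a^TQ\mathbf a=(\mathbf a-\mathbf c)^TQ(\mathbf a-\mathbf c)\}$. $\Delta_{k,n}=\mathrm{Conv}\{\sum_{i\in I}\mathbf e_i:|I|=k\}\subset\mathbb R^n$. *)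

theory Defs
  imports "HOL-Analysis.Analysis"
begin

text \<open>The genus-g banana graph matrix Q: Q_ii = 2, Q_ij = 1 for i \<noteq> j.
  Vectors of R^g are modelled as real^'g with 'g an arbitrary finite type, g = CARD('g).\<close>
definition banana_Q :: "'g::finite \<Rightarrow> 'g \<Rightarrow> real" where
  "banana_Q i j = (if i = j then 2 else 1)"

definition qform :: "('g::finite \<Rightarrow> 'g \<Rightarrow> real) \<Rightarrow> real^'g \<Rightarrow> real" where
  "qform Q x = (\<Sum>i\<in>UNIV. \<Sum>j\<in>UNIV. x$i * Q i j * x$j)"

definition int_vec :: "real^'g::finite \<Rightarrow> bool" where
  "int_vec c \<longleftrightarrow> (\<forall>i. c$i \<in> \<int>)"

definition voronoi :: "('g::finite \<Rightarrow> 'g \<Rightarrow> real) \<Rightarrow> (real^'g) set" where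
  "voronoi Q = {a. \<forall>c. int_vec c \<longrightarrow> qform Q a \<le> qform Q (a - c)}"

definition delaunay_set :: "('g::finite \<Rightarrow> 'g \<Rightarrow> real) \<Rightarrow> real^'g \<Rightarrow> (real^'g) set" where
  "delaunay_set Q a = {c. int_vec c \<and> qform Q a = qform Q (a - c)}"

definition delaunay_polytope :: "('g::finite \<Rightarrow> 'g \<Rightarrow> real) \<Rightarrow> real^'g \<Rightarrow> (real^'g) set" where
  "delaunay_polytope Q a = convex hull (delaunay_set Q a)"

definition bracket_k :: "nat \<Rightarrow> (real^'g::finite) set" where
  "bracket_k k = {a.
     (\<forall>i. a$i = - real k / real (CARD('g) + 1)
          \<or> a$i = real (CARD('g) + 1 - k) / real (CARD('g) + 1))
   \<and> (card {i. a$i = real (CARD('g) + 1 - k) / real (CARD('g) + 1)} = k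
      \<or> card {i. a$i = real (CARD('g) + 1 - k) / real (CARD('g) + 1)} = k - 1)}"

definition hypersimplex :: "nat \<Rightarrow> (real^'n::finite) set" where
  "hypersimplex k = convex hull {(\<chi> i. if i \<in> I then 1 else 0) | I. card I = k}"

definition comb_equiv :: "('a::real_vector) set \<Rightarrow> ('b::real_vector) set \<Rightarrow> bool" where
  "comb_equiv P P' \<longleftrightarrow> (\<exists>f. bij_betw f {F. F face_of P} {G. G face_of P'}
      \<and> (\<forall>F1 F2. F1 face_of P \<longrightarrow> F2 face_of P \<longrightarrow> (F1 \<subseteq> F2 \<longleftrightarrow> f F1 \<subseteq> f F2)))"

end

theory Submission
  imports Defs
begin

lemma comb_equiv_affine_image:
  fixes P :: "'a::real_vector set" and h :: "'a \<Rightarrow> 'b::real_vector"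
  assumes lh: "linear h" and ih: "inj h"
  shows "comb_equiv P ((+) t ` h ` P)"
proof -
  define \<phi> where "\<phi> = (\<lambda>x. t + h x)"
  have iphi: "inj \<phi>" using ih unfolding \<phi>_def inj_def by auto
  have img: "\<And>F. (+) t ` h ` F = \<phi> ` F" unfolding \<phi>_def by auto
  have fe: "\<And>F. \<phi> ` F face_of \<phi> ` P \<longleftrightarrow> F face_of P"
    by (metis img face_of_translation_eq face_of_linear_image lh ih)
  show ?thesis
    unfolding comb_equiv_def
  proof (intro exI[of _ "image \<phi>"] conjI allI impI)
    show "bij_betw ((`) \<phi>) {F. F face_of P} {G. G face_of (+) t ` h ` P}"
    proof (rule bij_betw_imageI)
      show "inj_on ((`) \<phi>) {F. F face_of P}"
        using iphi by (meson inj_image_eq_iff inj_onI)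
      show "(`) \<phi> ` {F. F face_of P} = {G. G face_of (+) t ` h ` P}"
      proof
        show "(`) \<phi> ` {F. F face_of P} \<subseteq> {G. G face_of (+) t ` h ` P}"
          using fe img by auto
        show "{G. G face_of (+) t ` h ` P} \<subseteq> (`) \<phi> ` {F. F face_of P}"
        proof
          fix G assume "G \<in> {G. G face_of (+) t ` h ` P}"
          then have G: "G face_of \<phi> ` P" using img by simp
          then have "G \<subseteq> \<phi> ` P" by (rule face_of_imp_subset)
          then have "G = \<phi> ` (\<phi> -` G)" by auto
          then show "G \<in> (`) \<phi> ` {F. F face_of P}" using G fe by (metis image_eqI mem_Collect_eq)
        qed
      qed
    qed
    fix F1 F2 show "F1 \<subseteq> F2 \<longleftrightarrow> \<phi> ` F1 \<subseteq> \<phi> ` F2"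
      using iphi by (simp add: inj_image_subset_iff)
  qed
qed

lemma sum_ind_card: "(\<Sum>i\<in>(UNIV::'a::finite set). if i \<in> S then (1::real) else 0) = real (card S)"
  by (simp add: sum.If_cases)

definition liftv :: "real^'g::finite \<Rightarrow> real^('g option)" where
  "liftv x = (\<chi> j. case j of None \<Rightarrow> - (\<Sum>i\<in>UNIV. x$i) | Some i \<Rightarrow> x$i)"

lemma liftv_None [simp]: "liftv x $ None = - (\<Sum>i\<in>UNIV. x$i)"
  by (simp add: liftv_def)

lemma liftv_Some [simp]: "liftv x $ Some i = x $ i"
  by (simp add: liftv_def)

lemma sum_option:
  fixes f :: "'g::finite option \<Rightarrow> 'b::comm_monoid_add"
  shows "(\<Sum>j\<in>UNIV. f j) = f None + (\<Sum>i\<in>UNIV. f (Some i))"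
proof -
  have "(\<Sum>j\<in>UNIV. f j) = (\<Sum>j\<in>insert None (range Some). f j)"
    by (simp add: UNIV_option_conv[symmetric])
  also have "\<dots> = f None + (\<Sum>j\<in>range Some. f j)"
    by (subst sum.insert) auto
  also have "(\<Sum>j\<in>range Some. f j) = (\<Sum>i\<in>UNIV. f (Some i))"
    by (subst sum.reindex) (auto simp: inj_def)
  finally show ?thesis .
qed

lemma linear_liftv: "linear (liftv :: real^'g::finite \<Rightarrow> _)"
  by (rule linearI) (auto simp: vec_eq_iff liftv_def split: option.splits simp: sum.distrib sum_distrib_left)

lemma inj_liftv: "inj (liftv :: real^'g::finite \<Rightarrow> _)"
  by (rule injI) (metis liftv_Some vec_eq_iff)

lemma sum_liftv: "(\<Sum>j\<in>UNIV. liftv x $ j) = 0"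
  by (simp add: sum_option)

lemma qform_liftv: "qform banana_Q x = (\<Sum>j\<in>UNIV. (liftv x $ j)^2)"
proof -
  have inner: "(\<Sum>j\<in>UNIV. x$i * banana_Q i j * x$j) = x$i * (\<Sum>j\<in>UNIV. x$j) + (x$i)^2" for i
  proof -
    have "(\<Sum>j\<in>UNIV. x$i * banana_Q i j * x$j) = (\<Sum>j\<in>UNIV. x$i * x$j + (if i = j then x$i * x$j else 0))"
      by (rule sum.cong) (auto simp: banana_Q_def)
    also have "\<dots> = x$i * (\<Sum>j\<in>UNIV. x$j) + (x$i)^2"
      by (simp add: sum.distrib sum_distrib_left power2_eq_square)
    finally show ?thesis .
  qed
  have "qform banana_Q x = (\<Sum>i\<in>UNIV. x$i * (\<Sum>j\<in>UNIV. x$j) + (x$i)^2)"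
    unfolding qform_def using inner by simp
  also have "\<dots> = (\<Sum>i\<in>UNIV. x$i)^2 + (\<Sum>i\<in>UNIV. (x$i)^2)"
    by (simp add: sum.distrib sum_distrib_right[symmetric] power2_eq_square)
  also have "\<dots> = (\<Sum>j\<in>UNIV. (liftv x $ j)^2)"
    by (simp add: sum_option)
  finally show ?thesis .
qed

lemma int_sq_ge: "(x::real) \<in> \<int> \<Longrightarrow> x^2 - x \<ge> 0"
proof -
  assume "x \<in> \<int>" then obtain m where m: "x = of_int m" by (auto elim: Ints_cases)
  have "m * m - m = m * (m - 1)" by (simp add: algebra_simps)
  also have "\<dots> \<ge> 0" by (cases "m \<le> 0") (auto simp: zero_le_mult_iff)
  finally have "m * m - m \<ge> 0" .
  then have "real_of_int (m * m - m) \<ge> 0" by linarith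
  then show ?thesis by (simp add: m power2_eq_square)
qed

lemma int_sq_eq: "(x::real) \<in> \<int> \<Longrightarrow> x^2 - x = 0 \<longleftrightarrow> x = 0 \<or> x = 1"
  by (auto simp: power2_eq_square algebra_simps)


theorem corollary3p6:
  fixes a :: "real^'g::finite" and k :: nat
  assumes "1 \<le> k" and "k \<le> CARD('g)"
    and "a \<in> bracket_k k"
    and "a extreme_point_of voronoi (banana_Q :: 'g \<Rightarrow> 'g \<Rightarrow> real)"
  shows "comb_equiv (delaunay_polytope banana_Q a) (hypersimplex k :: (real^('g option)) set)"
proof -
  define N where "N = CARD('g)"
  define p where "p = real (N + 1 - k) / real (N + 1)"
  define q where "q = - real k / real (N + 1)"
  have pq: "p = q + 1" using assms(2) unfolding p_def q_def N_def
    by (simp add: field_simps of_nat_diff)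
  define S where "S = {i. a$i = p}"
  have aS: "\<forall>i. a$i = q \<or> a$i = p" and cS: "card S = k \<or> card S = k - 1"
    using assms(3) unfolding bracket_k_def S_def p_def q_def N_def by auto
  have aS': "a$i = q + (if i \<in> S then 1 else 0)" for i
    using aS pq unfolding S_def by auto
  have suma: "(\<Sum>i\<in>UNIV. a$i) = real N * q + real (card S)"
    by (simp add: aS' sum.distrib N_def sum_ind_card)
  have None_val: "liftv a $ None = q \<or> liftv a $ None = p"
  proof -
    have e: "liftv a $ None = - real N * q - real (card S)" using suma by simp
    have qN: "- real N * q = real k - real k / real (N+1)" unfolding q_def
      by (simp add: field_simps)
    show ?thesis using cS
    proof
      assume "card S = k" then show ?thesis using e qN by (simp add: q_def)
    next
      assume "card S = k - 1" then have "real (card S) = real k - 1" using assms(1) by simp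
      then show ?thesis using e qN pq by (simp add: q_def)
    qed
  qed
  define T where "T = {j. liftv a $ j = p}"
  define e :: "real^('g option)" where "e = (\<chi> j. if j \<in> T then 1 else 0)"
  have la: "liftv a $ j = q + e $ j" for j
  proof (cases j)
    case None then show ?thesis using None_val pq by (auto simp: e_def T_def)
  next
    case (Some i) then show ?thesis using aS pq by (auto simp: e_def T_def)
  qed
  have sume: "(\<Sum>j\<in>UNIV. e $ j) = real (card T)"
    by (simp add: e_def sum_ind_card)
  have cardopt: "real CARD('g option) = real N + 1" by (simp add: N_def)
  have "0 = (\<Sum>j\<in>UNIV. liftv a $ j)" by (simp add: sum_liftv)
  also have "\<dots> = real CARD('g option) * q + real (card T)"
    by (simp add: la sum.distrib sume)
  finally have "(real N + 1) * real k = (real N + 1) * real (card T)" using cardopt unfolding q_def by (simp add: field_simps)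
  then have "real k = real (card T)" by (metis mult_cancel_left of_nat_Suc of_nat_eq_0_iff add.commute nat.simps(3))
  then have cT: "card T = k" by simp
  have ecard: "(\<Sum>j\<in>UNIV. e $ j) = real k" using sume cT by simp
  have eint: "e $ j \<in> \<int>" for j by (simp add: e_def)
  have qf: "qform banana_Q (a - c) = (\<Sum>j\<in>UNIV. (e $ j - liftv c $ j)^2) + 2 * q * real k + (real N + 1) * q^2"
    for c :: "real^'g"
  proof -
    have lin: "liftv (a - c) $ j = q + (e $ j - liftv c $ j)" for j
      using linear_diff[OF linear_liftv, of a c] la by simp
    have "qform banana_Q (a - c) = (\<Sum>j\<in>UNIV. (e $ j - liftv c $ j)^2 + 2 * q * (e $ j - liftv c $ j) + q^2)"
      by (simp add: qform_liftv lin power2_eq_square algebra_simps)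
    also have "\<dots> = (\<Sum>j\<in>UNIV. (e $ j - liftv c $ j)^2) + 2 * q * ((\<Sum>j\<in>UNIV. e $ j) - (\<Sum>j\<in>UNIV. liftv c $ j)) + real CARD('g option) * q^2"
      by (simp add: sum.distrib sum_subtractf[symmetric] sum_distrib_left[symmetric])
    also have "\<dots> = (\<Sum>j\<in>UNIV. (e $ j - liftv c $ j)^2) + 2 * q * real k + (real N + 1) * q^2"
      using ecard cardopt by (simp add: sum_liftv algebra_simps)
    finally show ?thesis .
  qed
  have liftint: "int_vec c \<Longrightarrow> liftv c $ j \<in> \<int>" for c :: "real^'g" and j
    by (cases j) (auto simp: int_vec_def intro!: Ints_sum)
  have D: "delaunay_set banana_Q a = {c. int_vec c \<and> (\<forall>j. e $ j - liftv c $ j \<in> {0, 1})}"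
  proof -
    have "qform banana_Q a = qform banana_Q (a - c) \<longleftrightarrow> (\<forall>j. e $ j - liftv c $ j \<in> {0, 1})"
      if ic: "int_vec c" for c :: "real^'g"
    proof -
      have q0: "qform banana_Q a = real k + 2 * q * real k + (real N + 1) * q^2"
      proof -
        have l0: "liftv (0::real^'g) = 0" by (rule linear_0[OF linear_liftv])
        have "(\<Sum>j\<in>UNIV. (e $ j)^2) = (\<Sum>j\<in>UNIV. e $ j)"
          by (rule sum.cong) (auto simp: e_def)
        then show ?thesis using qf[of 0] ecard by (simp add: l0)
      qed
      have di: "e $ j - liftv c $ j \<in> \<int>" for j using eint liftint[OF ic] by (simp add: Ints_diff)
      have sd: "(\<Sum>j\<in>UNIV. e $ j - liftv c $ j) = real k"
        using ecard sum_liftv by (simp add: sum_subtractf)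
      have "qform banana_Q a = qform banana_Q (a - c) \<longleftrightarrow>
            (\<Sum>j\<in>UNIV. (e $ j - liftv c $ j)^2 - (e $ j - liftv c $ j)) = 0"
        using q0 qf[of c] sd by (simp add: sum_subtractf) auto
      also have "\<dots> \<longleftrightarrow> (\<forall>j. (e $ j - liftv c $ j)^2 - (e $ j - liftv c $ j) = 0)"
      proof -
        have nn: "\<And>j. j \<in> UNIV \<Longrightarrow> 0 \<le> (e $ j - liftv c $ j)^2 - (e $ j - liftv c $ j)"
          using int_sq_ge[OF di] by blast
        show ?thesis using sum_nonneg_eq_0_iff[of UNIV "\<lambda>j. (e $ j - liftv c $ j)^2 - (e $ j - liftv c $ j)", OF finite nn] by simp
      qed
      also have "\<dots> \<longleftrightarrow> (\<forall>j. e $ j - liftv c $ j \<in> {0, 1})"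
        using int_sq_eq[OF di] by auto
      finally show ?thesis .
    qed
    then show ?thesis unfolding delaunay_set_def by blast
  qed
  define h :: "real^'g \<Rightarrow> real^('g option)" where "h = (\<lambda>x. - liftv x)"
  have lh: "linear h" unfolding h_def by (intro linear_compose_neg linear_liftv)
  have ih: "inj h" unfolding h_def using inj_liftv by (simp add: inj_def)
  define V :: "(real^('g option)) set" where "V = {(\<chi> i. if i \<in> I then 1 else 0) | I. card I = k}"
  have VD: "V = (+) e ` h ` delaunay_set banana_Q a"
  proof
    show "(+) e ` h ` delaunay_set banana_Q a \<subseteq> V"
    proof
      fix v assume "v \<in> (+) e ` h ` delaunay_set banana_Q a"
      then obtain c where c: "int_vec c" "\<forall>j. e $ j - liftv c $ j \<in> {0, 1}" and v: "v = e - liftv c"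
        unfolding D h_def by auto
      define I where "I = {j. v $ j = 1}"
      have vI: "v = (\<chi> i. if i \<in> I then 1 else 0)"
        using c(2) unfolding v I_def by (auto simp: vec_eq_iff)
      have "real (card I) = (\<Sum>j\<in>UNIV. v $ j)" by (simp add: vI sum_ind_card)
      also have "\<dots> = real k" using ecard sum_liftv by (simp add: v sum_subtractf)
      finally have "card I = k" by simp
      then show "v \<in> V" unfolding V_def using vI by blast
    qed
    show "V \<subseteq> (+) e ` h ` delaunay_set banana_Q a"
    proof
      fix v assume "v \<in> V"
      then obtain I where vI: "v = (\<chi> i. if i \<in> I then 1 else 0)" and cI: "card I = k"
        unfolding V_def by blast
      define c :: "real^'g" where "c = (\<chi> i. e $ Some i - v $ Some i)"
      have sv: "(\<Sum>j\<in>UNIV. v $ j) = real k" by (simp add: vI cI sum_ind_card)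
      have lc: "liftv c = e - v"
      proof -
        have "(\<Sum>j\<in>UNIV. e $ j - v $ j) = 0" using ecard sv by (simp add: sum_subtractf)
        then have "liftv c $ None = e $ None - v $ None"
          unfolding sum_option by (simp add: c_def)
        then show ?thesis
        proof -
          assume N0: "liftv c $ None = e $ None - v $ None"
          show ?thesis
          proof (rule vec_eq_iff[THEN iffD2, rule_format])
            fix j show "liftv c $ j = (e - v) $ j"
              using N0 by (cases j) (simp_all add: c_def)
          qed
        qed
      qed
      have ic: "int_vec c" unfolding int_vec_def c_def by (simp add: vI e_def)
      have "c \<in> delaunay_set banana_Q a" unfolding D using ic lc by (auto simp: vI)
      moreover have "v = e + h c" using lc by (simp add: h_def)
      ultimately show "v \<in> (+) e ` h ` delaunay_set banana_Q a" by blast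
    qed
  qed
  have "hypersimplex k = (+) e ` h ` delaunay_polytope banana_Q a"
    unfolding hypersimplex_def delaunay_polytope_def V_def[symmetric] VD
    by (simp add: convex_hull_linear_image[OF lh] convex_hull_translation[symmetric])
  then show ?thesis using comb_equiv_affine_image[OF lh ih] by simp
qed

end
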